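(* Let $A$ be a finite-dimensional associative superalgebra over an algebraically closed field $\mathbb{K}$ of characteristic zero whose product is not identically zero. Then $A$ does not admit simultaneously an even-symmetric structure and an odd-symmetric structure.
   Context: A superalgebra is a $\mathbb{Z}_2$-graded algebra $A=A_{\bar 0}\oplus A_{\bar 1}$ with $A_\alpha A_\beta\subseteq A_{\alpha+\beta}$; $|x|$ denotes the degree of a homogeneous element. A bilinear form $B$ on $A$ is even if $B(A_{\bar 0},A_{\bar 1})=B(A_{\bar 1},A_{\bar 0})=\{0\}$ and odd if $B(A_{\bar 0},A_{\bar 0})=B(A_{\bar 1},A_{\bar 1})=\{0\}$; supersymmetric if $B(x,y)=(-1)^{|x||y|}B(y,x)$ for homogeneous $x,y$; associative if $B(x.y,z)=B(x,y.z)$; non-degenerate if $B(x,A)=\{0\}$ implies $x=0$. An even-symmetric (resp. odd-symmetric) structure on $A$ is an even (resp. odd), supersymmetric, associative, non-degenerate bilinear form on $A$. *)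

theory Defs
  imports Main "HOL-Computational_Algebra.Polynomial"
begin

definition bilinear_product :: "('k::field \<Rightarrow> 'a::ab_group_add \<Rightarrow> 'a) \<Rightarrow> ('a \<Rightarrow> 'a \<Rightarrow> 'a) \<Rightarrow> bool" where
  "bilinear_product scale mul \<longleftrightarrow>
     (\<forall>x y z. mul (x + y) z = mul x z + mul y z) \<and>
     (\<forall>x y z. mul x (y + z) = mul x y + mul x z) \<and>
     (\<forall>c x y. mul (scale c x) y = scale c (mul x y)) \<and>
     (\<forall>c x y. mul x (scale c y) = scale c (mul x y))"

definition superalgebra ::
  "('k::field \<Rightarrow> 'a::ab_group_add \<Rightarrow> 'a) \<Rightarrow> ('a \<Rightarrow> 'a \<Rightarrow> 'a) \<Rightarrow> 'a set \<Rightarrow> 'a set \<Rightarrow> bool" where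
  "superalgebra scale mul A0 A1 \<longleftrightarrow>
     vector_space scale \<and>
     module.subspace scale A0 \<and> module.subspace scale A1 \<and>
     A0 \<inter> A1 = {0} \<and> (\<forall>x. \<exists>a\<in>A0. \<exists>b\<in>A1. x = a + b) \<and>
     bilinear_product scale mul \<and>
     (\<forall>x\<in>A0. \<forall>y\<in>A0. mul x y \<in> A0) \<and>
     (\<forall>x\<in>A0. \<forall>y\<in>A1. mul x y \<in> A1) \<and>
     (\<forall>x\<in>A1. \<forall>y\<in>A0. mul x y \<in> A1) \<and>
     (\<forall>x\<in>A1. \<forall>y\<in>A1. mul x y \<in> A0)"

definition finite_dimensional :: "('k::field \<Rightarrow> 'a::ab_group_add \<Rightarrow> 'a) \<Rightarrow> bool" where
  "finite_dimensional scale \<longleftrightarrow> (\<exists>S. finite S \<and> module.span scale S = UNIV)"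

definition associative_product :: "('a \<Rightarrow> 'a \<Rightarrow> 'a) \<Rightarrow> bool" where
  "associative_product mul \<longleftrightarrow> (\<forall>x y z. mul (mul x y) z = mul x (mul y z))"

definition bilinear_form :: "('k::field \<Rightarrow> 'a::ab_group_add \<Rightarrow> 'a) \<Rightarrow> ('a \<Rightarrow> 'a \<Rightarrow> 'k) \<Rightarrow> bool" where
  "bilinear_form scale B \<longleftrightarrow>
     (\<forall>x y z. B (x + y) z = B x z + B y z) \<and>
     (\<forall>x y z. B x (y + z) = B x y + B x z) \<and>
     (\<forall>c x y. B (scale c x) y = c * B x y) \<and>
     (\<forall>c x y. B x (scale c y) = c * B x y)"

definition even_form :: "'a set \<Rightarrow> 'a set \<Rightarrow> ('a \<Rightarrow> 'a \<Rightarrow> 'k::field) \<Rightarrow> bool" where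
  "even_form A0 A1 B \<longleftrightarrow> (\<forall>x\<in>A0. \<forall>y\<in>A1. B x y = 0 \<and> B y x = 0)"

definition odd_form :: "'a set \<Rightarrow> 'a set \<Rightarrow> ('a \<Rightarrow> 'a \<Rightarrow> 'k::field) \<Rightarrow> bool" where
  "odd_form A0 A1 B \<longleftrightarrow> (\<forall>x\<in>A0. \<forall>y\<in>A0. B x y = 0) \<and> (\<forall>x\<in>A1. \<forall>y\<in>A1. B x y = 0)"

definition supersymmetric :: "'a set \<Rightarrow> 'a set \<Rightarrow> ('a \<Rightarrow> 'a \<Rightarrow> 'k::field) \<Rightarrow> bool" where
  "supersymmetric A0 A1 B \<longleftrightarrow>
     (\<forall>x\<in>A0. \<forall>y\<in>A0. B x y = B y x) \<and>
     (\<forall>x\<in>A0. \<forall>y\<in>A1. B x y = B y x) \<and>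
     (\<forall>x\<in>A1. \<forall>y\<in>A0. B x y = B y x) \<and>
     (\<forall>x\<in>A1. \<forall>y\<in>A1. B x y = - B y x)"

definition associative_form :: "('a \<Rightarrow> 'a \<Rightarrow> 'a) \<Rightarrow> ('a \<Rightarrow> 'a \<Rightarrow> 'k::field) \<Rightarrow> bool" where
  "associative_form mul B \<longleftrightarrow> (\<forall>x y z. B (mul x y) z = B x (mul y z))"

definition nondegenerate_form :: "('a::zero \<Rightarrow> 'a \<Rightarrow> 'k::field) \<Rightarrow> bool" where
  "nondegenerate_form B \<longleftrightarrow> (\<forall>x. (\<forall>y. B x y = 0) \<longrightarrow> x = 0)"

definition even_symmetric_structure where
  "even_symmetric_structure scale mul A0 A1 B \<longleftrightarrow>
     bilinear_form scale B \<and> even_form A0 A1 B \<and> supersymmetric A0 A1 B \<and>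
     associative_form mul B \<and> nondegenerate_form B"

definition odd_symmetric_structure where
  "odd_symmetric_structure scale mul A0 A1 B \<longleftrightarrow>
     bilinear_form scale B \<and> odd_form A0 A1 B \<and> supersymmetric A0 A1 B \<and>
     associative_form mul B \<and> nondegenerate_form B"

end

theory Submission
  imports Defs
begin

lemma bf_facts:
  assumes "bilinear_form scale B"
  shows "B x 0 = 0" "B 0 y = 0" "B (-x) y = - B x y" "B x (-y) = - B x y"
    "B (x - x') y = B x y - B x' y" "B (x + x') y = B x y + B x' y" "B x (y + y') = B x y + B x y'"
    "B (scale c x) y = c * B x y" "B x (scale c y) = c * B x y"
proof -
  have a1: "\<And>x y z. B (x + y) z = B x z + B y z" and a2: "\<And>x y z. B x (y + z) = B x y + B x z"
    and a3: "\<And>c x y. B (scale c x) y = c * B x y" and a4: "\<And>c x y. B x (scale c y) = c * B x y"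
    using assms unfolding bilinear_form_def by auto
  show z1: "B x 0 = 0" using a2[of x 0 0] by (metis add.right_neutral add_left_cancel)
  show z2: "B 0 y = 0" using a1[of 0 0 y] by (metis add.right_neutral add_left_cancel)
  show "B (-x) y = - B x y" using a1[of x "-x" y] z2 by (metis add.right_inverse minus_unique)
  show "B x (-y) = - B x y" using a2[of x y "-y"] z1 by (metis add.right_inverse minus_unique)
  show "B (x - x') y = B x y - B x' y"
    using a1[of x' "x - x'" y] by (simp add: algebra_simps)
  show "B (x + x') y = B x y + B x' y" "B x (y + y') = B x y + B x y'" by (rule a1, rule a2)
  show "B (scale c x) y = c * B x y" "B x (scale c y) = c * B x y" by (rule a3, rule a4)
qed

lemma bf_eq:
  assumes "bilinear_form scale B" "nondegenerate_form B" "\<And>z. B a z = B b z"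
  shows "a = b"
proof -
  have "\<forall>z. B (a - b) z = 0" using bf_facts(5)[OF assms(1)] assms(3) by simp
  hence "a - b = 0" using assms(2) unfolding nondegenerate_form_def by blast
  thus ?thesis by simp
qed

context vector_space
begin

lemma repr:
  assumes fin: "finite S" and sp: "span S = UNIV"
    and bB: "bilinear_form scale B" and nd: "nondegenerate_form B"
    and bB': "bilinear_form scale B'"
  shows "\<exists>D. \<forall>x y. B' x y = B (D x) y"
proof -
  obtain \<beta> where b1: "\<beta> \<subseteq> S" and ind: "independent \<beta>" and b3: "S \<subseteq> span \<beta>"
    using maximal_independent_subset[of S] by blast
  have finb: "finite \<beta>" using b1 fin finite_subset by blast
  have spb: "span \<beta> = UNIV" using span_mono[OF b3] span_span sp by auto
  interpret F: finite_dimensional_vector_space scale \<beta>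
    by unfold_locales (auto simp: finb ind spb)
  have ext: "\<And>w x. (\<forall>e\<in>\<beta>. B w e = B' x e) \<Longrightarrow> (\<forall>y. B w y = B' x y)"
  proof (intro allI)
    fix w x y assume h: "\<forall>e\<in>\<beta>. B w e = B' x e"
    have y: "y \<in> span \<beta>" using spb by auto
    show "B w y = B' x y"
      using y
    proof (induction rule: span_induct)
      case base
      show ?case unfolding subspace_def
        using bf_facts[OF bB] bf_facts[OF bB'] by auto
    next
      case (step e) thus ?case using h by auto
    qed
  qed
  define T where "T w = (\<Sum>e\<in>\<beta>. scale (B w e) e)" for w
  have lin: "Vector_Spaces.linear scale scale T"
    unfolding Vector_Spaces.linear_iff
  proof (intro conjI allI)
    show "vector_space scale" by unfold_locales
    show "vector_space scale" by unfold_locales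
    fix x y c
    show "T (x + y) = T x + T y"
      unfolding T_def by (simp add: bf_facts[OF bB] scale_left_distrib sum.distrib)
    show "T (scale c x) = scale c (T x)"
      unfolding T_def by (simp add: bf_facts[OF bB] scale_sum_right)
  qed
  have coef: "\<And>u. (\<Sum>e\<in>\<beta>. scale (u e) e) = 0 \<Longrightarrow> \<forall>e\<in>\<beta>. u e = 0"
    using ind dependent_finite[OF finb] by blast
  interpret L: Vector_Spaces.linear scale scale T by (rule lin)
  have "inj T"
    unfolding L.inj_iff_eq_0
  proof (intro allI impI)
    fix w assume "T w = 0"
    hence "\<forall>e\<in>\<beta>. B w e = 0" using coef[of "\<lambda>e. B w e"] unfolding T_def by blast
    hence "\<forall>y. B w y = 0" using ext[of w 0] bf_facts(2)[OF bB'] by simp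
    thus "w = 0" using nd unfolding nondegenerate_form_def by simp
  qed
  hence sj: "surj T" using F.linear_inj_imp_surj[OF lin] by blast
  have "\<forall>x. \<exists>w. \<forall>y. B' x y = B w y"
  proof
    fix x
    obtain w where w: "T w = (\<Sum>e\<in>\<beta>. scale (B' x e) e)" using sj by (metis surjD)
    have "(\<Sum>e\<in>\<beta>. scale (B w e - B' x e) e) = 0"
      using w unfolding T_def by (simp add: scale_left_diff_distrib sum_subtractf)
    hence "\<forall>e\<in>\<beta>. B w e = B' x e" using coef[of "\<lambda>e. B w e - B' x e"] by simp
    thus "\<exists>w. \<forall>y. B' x y = B w y" using ext by metis
  qed
  thus ?thesis by metis
qed

end

theorem mainTheorem3:
  fixes scale :: "'k::{alg_closed_field, field_char_0} \<Rightarrow> 'a::ab_group_add \<Rightarrow> 'a"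
    and mul :: "'a \<Rightarrow> 'a \<Rightarrow> 'a"
    and A0 A1 :: "'a set"
  assumes "superalgebra scale mul A0 A1"
    and "finite_dimensional scale"
    and "associative_product mul"
    and "\<exists>x y. mul x y \<noteq> 0"
  shows "\<not> ((\<exists>B. even_symmetric_structure scale mul A0 A1 B) \<and>
             (\<exists>B'. odd_symmetric_structure scale mul A0 A1 B'))"
proof
  assume "(\<exists>B. even_symmetric_structure scale mul A0 A1 B) \<and>
             (\<exists>B'. odd_symmetric_structure scale mul A0 A1 B')"
  then obtain B B' where eB: "even_symmetric_structure scale mul A0 A1 B"
    and oB: "odd_symmetric_structure scale mul A0 A1 B'" by blast
  have vs: "vector_space scale" and dec: "\<And>x. \<exists>a\<in>A0. \<exists>b\<in>A1. x = a + b"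
    and bp: "bilinear_product scale mul"
    and p00: "\<And>x y. x\<in>A0 \<Longrightarrow> y\<in>A0 \<Longrightarrow> mul x y \<in> A0"
    using assms(1) unfolding superalgebra_def by auto
  interpret V: vector_space scale by (rule vs)
  obtain S where fS: "finite S" and spS: "V.span S = UNIV"
    using assms(2) unfolding finite_dimensional_def by blast
  have bB: "bilinear_form scale B" and evB: "even_form A0 A1 B" and ssB: "supersymmetric A0 A1 B"
    and aB: "associative_form mul B" and nB: "nondegenerate_form B"
    using eB unfolding even_symmetric_structure_def by auto
  have bB': "bilinear_form scale B'" and odB: "odd_form A0 A1 B'" and ssB': "supersymmetric A0 A1 B'"
    and aB': "associative_form mul B'" and nB': "nondegenerate_form B'"
    using oB unfolding odd_symmetric_structure_def by auto
  have am: "\<And>x y z. mul (mul x y) z = mul x (mul y z)"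
    using assms(3) unfolding associative_product_def by auto
  have aBx: "\<And>x y z. B (mul x y) z = B x (mul y z)" using aB unfolding associative_form_def by auto
  have aBx': "\<And>x y z. B' (mul x y) z = B' x (mul y z)" using aB' unfolding associative_form_def by auto
  have ev1: "\<And>x y. x\<in>A0 \<Longrightarrow> y\<in>A1 \<Longrightarrow> B x y = 0" "\<And>x y. x\<in>A0 \<Longrightarrow> y\<in>A1 \<Longrightarrow> B y x = 0"
    using evB unfolding even_form_def by blast+
  have od1: "\<And>x y. x\<in>A0 \<Longrightarrow> y\<in>A0 \<Longrightarrow> B' x y = 0" "\<And>x y. x\<in>A1 \<Longrightarrow> y\<in>A1 \<Longrightarrow> B' x y = 0"
    using odB unfolding odd_form_def by blast+
  have ss: "\<And>x y. x\<in>A0 \<Longrightarrow> y\<in>A0 \<Longrightarrow> B x y = B y x"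
    "\<And>x y. x\<in>A0 \<Longrightarrow> y\<in>A1 \<Longrightarrow> B x y = B y x"
    "\<And>x y. x\<in>A1 \<Longrightarrow> y\<in>A1 \<Longrightarrow> B x y = - B y x"
    using ssB unfolding supersymmetric_def by blast+
  have ss': "\<And>x y. x\<in>A0 \<Longrightarrow> y\<in>A0 \<Longrightarrow> B' x y = B' y x"
    "\<And>x y. x\<in>A0 \<Longrightarrow> y\<in>A1 \<Longrightarrow> B' x y = B' y x"
    "\<And>x y. x\<in>A1 \<Longrightarrow> y\<in>A0 \<Longrightarrow> B' x y = B' y x"
    using ssB' unfolding supersymmetric_def by blast+
  note fB = bf_facts[OF bB] and fB' = bf_facts[OF bB']
  have eqB: "\<And>a b. (\<And>z. B a z = B b z) \<Longrightarrow> a = b" using bf_eq[OF bB nB] by blast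
  have eqB': "\<And>a b. (\<And>z. B' a z = B' b z) \<Longrightarrow> a = b" using bf_eq[OF bB' nB'] by blast
  obtain D where D: "\<And>x y. B' x y = B (D x) y"
    using V.repr[OF fS spS bB nB bB'] by blast
  obtain E where E: "\<And>x y. B x y = B' (E x) y"
    using V.repr[OF fS spS bB' nB' bB] by blast
  have DE: "\<And>x. D (E x) = x" by (rule eqB) (simp add: D[symmetric] E[symmetric])
  have Dadd: "\<And>x y. D (x + y) = D x + D y"
    by (rule eqB) (simp add: D[symmetric] fB fB')
  have Dneg: "\<And>x. D (- x) = - D x"
    by (rule eqB) (simp add: D[symmetric] fB fB')
  have S0: "\<And>x v. x \<in> A0 \<Longrightarrow> B x v = B v x"
  proof -
    fix x v assume x: "x \<in> A0"
    obtain a b where a: "a \<in> A0" and b: "b \<in> A1" and v: "v = a + b" using dec by blast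
    show "B x v = B v x" using ss(1)[OF x a] ss(2)[OF x b] by (simp add: v fB)
  qed
  have S1: "\<And>x v. x \<in> A1 \<Longrightarrow> B x v = - B v x"
  proof -
    fix x v assume x: "x \<in> A1"
    obtain a b where a: "a \<in> A0" and b: "b \<in> A1" and v: "v = a + b" using dec by blast
    show "B x v = - B v x" using ev1[OF a x] ss(3)[OF x b] by (simp add: v fB)
  qed
  have Sh: "\<And>x v. x \<in> A0 \<or> x \<in> A1 \<Longrightarrow> B' x v = B' v x"
  proof -
    fix x v assume x: "x \<in> A0 \<or> x \<in> A1"
    obtain a b where a: "a \<in> A0" and b: "b \<in> A1" and v: "v = a + b" using dec by blast
    show "B' x v = B' v x" using x
    proof
      assume x: "x \<in> A0" show ?thesis using ss'(1)[OF x a] ss'(2)[OF x b] by (simp add: v fB')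
    next
      assume x: "x \<in> A1" show ?thesis using ss'(3)[OF x a] od1(2)[OF x b] od1(2)[OF b x]
        by (simp add: v fB')
    qed
  qed
  have Sym': "\<And>x v. B' x v = B' v x"
  proof -
    fix x v
    obtain a b where a: "a \<in> A0" and b: "b \<in> A1" and x: "x = a + b" using dec by blast
    show "B' x v = B' v x" using Sh[of a v] Sh[of b v] a b by (simp add: x fB')
  qed
  have K0: "\<And>x w. x \<in> A0 \<Longrightarrow> B x (D w) = B (D x) w"
  proof -
    fix x w assume x: "x \<in> A0"
    have "B x (D w) = B (D w) x" by (rule S0[OF x])
    also have "\<dots> = B' w x" by (rule D[symmetric])
    also have "\<dots> = B' x w" by (rule Sym')
    also have "\<dots> = B (D x) w" by (rule D)
    finally show "B x (D w) = B (D x) w" .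
  qed
  have K1: "\<And>x w. x \<in> A1 \<Longrightarrow> B x (D w) = - B (D x) w"
  proof -
    fix x w assume x: "x \<in> A1"
    have "B x (D w) = - B (D w) x" by (rule S1[OF x])
    also have "B (D w) x = B' w x" by (rule D[symmetric])
    also have "B' w x = B' x w" by (rule Sym')
    also have "B' x w = B (D x) w" by (rule D)
    finally show "B x (D w) = - B (D x) w" .
  qed
  have M: "\<And>x y. D (mul x y) = mul (D x) y"
    by (rule eqB) (simp add: D[symmetric] aBx aBx')
  have H0: "\<And>x y. x \<in> A0 \<Longrightarrow> mul x (D y) = mul (D x) y"
  proof -
    fix x y assume x: "x \<in> A0"
    show "mul x (D y) = mul (D x) y"
    proof (rule eqB)
      fix z
      have "B (mul x (D y)) z = B x (D (mul y z))" by (simp add: aBx M)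
      also have "\<dots> = B (D x) (mul y z)" by (rule K0[OF x])
      also have "\<dots> = B (mul (D x) y) z" by (simp add: aBx)
      finally show "B (mul x (D y)) z = B (mul (D x) y) z" .
    qed
  qed
  have bpm: "\<And>a b. mul (- a) b = - mul a b"
  proof -
    fix a b
    have "mul (a + - a) b = mul a b + mul (- a) b" using bp unfolding bilinear_product_def by blast
    moreover have "mul 0 b = 0"
    proof -
      have "mul (0 + 0) b = mul 0 b + mul 0 b" using bp unfolding bilinear_product_def by blast
      thus ?thesis by simp
    qed
    ultimately show "mul (- a) b = - mul a b" by (simp add: eq_neg_iff_add_eq_0 add.commute)
  qed
  have H1: "\<And>x y. x \<in> A1 \<Longrightarrow> mul x (D y) = - mul (D x) y"
  proof -
    fix x y assume x: "x \<in> A1"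
    show "mul x (D y) = - mul (D x) y"
    proof (rule eqB)
      fix z
      have "B (mul x (D y)) z = B x (D (mul y z))" by (simp add: aBx M)
      also have "\<dots> = - B (D x) (mul y z)" by (rule K1[OF x])
      also have "\<dots> = B (- mul (D x) y) z" by (simp add: aBx fB)
      finally show "B (mul x (D y)) z = B (- mul (D x) y) z" .
    qed
  qed
  have P0: "\<And>x. x \<in> A0 \<Longrightarrow> D x \<in> A1"
  proof -
    fix x assume x: "x \<in> A0"
    obtain a b where a: "a \<in> A0" and b: "b \<in> A1" and Dx: "D x = a + b" using dec by blast
    have "a = 0"
    proof (rule eqB)
      fix y
      obtain c d where c: "c \<in> A0" and d: "d \<in> A1" and y: "y = c + d" using dec by blast
      have "B (D x) c = 0" using D od1(1)[OF x c] by metis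
      thus "B a y = B 0 y" using ev1(1)[OF a d] ev1(1)[OF c b] ss(1)[OF a c] ss(2)[OF c b] Dx
        by (simp add: y fB)
    qed
    thus "D x \<in> A1" using Dx b by simp
  qed
  have P1: "\<And>x. x \<in> A1 \<Longrightarrow> D x \<in> A0"
  proof -
    fix x assume x: "x \<in> A1"
    obtain a b where a: "a \<in> A0" and b: "b \<in> A1" and Dx: "D x = a + b" using dec by blast
    have "b = 0"
    proof (rule eqB)
      fix y
      obtain c d where c: "c \<in> A0" and d: "d \<in> A1" and y: "y = c + d" using dec by blast
      have "B (D x) d = 0" using D od1(2)[OF x d] by metis
      thus "B b y = B 0 y" using ev1(2)[OF c b] ev1(1)[OF a d] Dx
        by (simp add: y fB)
    qed
    thus "D x \<in> A0" using Dx a by simp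
  qed
  have half: "\<And>w::'a. w = - w \<Longrightarrow> w = 0"
  proof -
    fix w :: 'a assume h: "w = - w"
    have ww: "w + w = 0" by (subst h) (rule add.left_inverse)
    have "scale ((1::'k) + 1) w = w + w" by (simp only: V.scale_left_distrib V.scale_one)
    hence "scale 2 w = 0" using ww by (simp only: one_add_one)
    hence "scale (1/2) (scale 2 w) = scale (1/2) 0" by (rule arg_cong)
    thus "w = 0" by (simp only: V.scale_scale V.scale_zero_right) simp
  qed
  have Z: "\<And>x y. x \<in> A0 \<or> x \<in> A1 \<Longrightarrow> mul (D (D x)) y = 0"
  proof -
    fix x y assume "x \<in> A0 \<or> x \<in> A1"
    thus "mul (D (D x)) y = 0"
    proof
      assume x: "x \<in> A0"
      have "mul (D x) (D y) = - mul (D (D x)) y" by (rule H1[OF P0[OF x]])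
      moreover have "mul (D x) (D y) = mul (D (D x)) y" using M H0[OF x] by metis
      ultimately show ?thesis using half by metis
    next
      assume x: "x \<in> A1"
      have "mul (D x) (D y) = mul (D (D x)) y" by (rule H0[OF P1[OF x]])
      moreover have "mul (D x) (D y) = - mul (D (D x)) y" using M H1[OF x] Dneg by metis
      ultimately show ?thesis using half by (metis minus_minus)
    qed
  qed
  have "\<And>u y. mul u y = 0"
  proof -
    fix u y
    obtain a b where a: "a \<in> A0" and b: "b \<in> A1" and v: "E (E u) = a + b" using dec by blast
    have "u = D (D a) + D (D b)" using DE v Dadd by metis
    moreover have "mul (D (D a) + D (D b)) y = mul (D (D a)) y + mul (D (D b)) y"
      using bp unfolding bilinear_product_def by blast
    ultimately show "mul u y = 0" using Z a b by simp
  qed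
  thus False using assms(4) by blast
qed

end
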